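(* Let $R$ be a right $\sigma$-reversible ring, where $\sigma$ is an endomorphism of $R$ with $\sigma(1)=1$. Then (1) $\sigma(e)=e$ for every idempotent $e\in R$; and (2) $R$ is abelian, i.e. every idempotent of $R$ is central.
   Context: All rings are associative with identity; $\sigma$ denotes a nonzero, non-identity ring endomorphism of $R$. $R$ is right $\sigma$-reversible if for all $a,b\in R$, $ab=0$ implies $b\sigma(a)=0$. *)

theory Defs
  imports Main
begin

definition ring_endo :: "('a::ring_1 \<Rightarrow> 'a) \<Rightarrow> bool" where
  "ring_endo \<sigma> \<longleftrightarrow> (\<forall>a b. \<sigma> (a + b) = \<sigma> a + \<sigma> b) \<and> (\<forall>a b. \<sigma> (a * b) = \<sigma> a * \<sigma> b)"

definition right_sigma_reversible :: "('a::ring_1 \<Rightarrow> 'a) \<Rightarrow> bool" where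
  "right_sigma_reversible \<sigma> \<longleftrightarrow> (\<forall>a b. a * b = 0 \<longrightarrow> b * \<sigma> a = 0)"

definition idempotent :: "'a::ring_1 \<Rightarrow> bool" where
  "idempotent e \<longleftrightarrow> e * e = e"

definition central :: "'a::ring_1 \<Rightarrow> bool" where
  "central e \<longleftrightarrow> (\<forall>r. e * r = r * e)"

definition abelian_ring :: "'a::ring_1 itself \<Rightarrow> bool" where
  "abelian_ring _ \<longleftrightarrow> (\<forall>e::'a. idempotent e \<longrightarrow> central e)"

end

theory Submission
  imports Defs
begin

theorem lemma3p1:
  fixes \<sigma> :: "'a::ring_1 \<Rightarrow> 'a"
  assumes endo: "ring_endo \<sigma>"
    and nonzero: "\<sigma> \<noteq> (\<lambda>_. 0)"
    and nonid: "\<sigma> \<noteq> id"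
    and one: "\<sigma> 1 = 1"
    and rev: "right_sigma_reversible \<sigma>"
  shows "(\<forall>e. idempotent e \<longrightarrow> \<sigma> e = e) \<and> abelian_ring TYPE('a)"
proof -
  have add: "\<And>a b. \<sigma> (a + b) = \<sigma> a + \<sigma> b" using endo unfolding ring_endo_def by blast
  have R: "\<And>a b. a * b = 0 \<Longrightarrow> b * \<sigma> a = 0" using rev unfolding right_sigma_reversible_def by blast
  have sub: "\<sigma> (1 - e) = 1 - \<sigma> e" for e
  proof -
    have "\<sigma> 1 = \<sigma> (1 - e) + \<sigma> e" using add[of "1 - e" e] by simp
    thus ?thesis using one by (simp add: algebra_simps)
  qed
  have fix_: "\<sigma> e = e" if "idempotent e" for e
  proof -
    from that have ee: "e * e = e" unfolding idempotent_def .
    have "e * (1 - e) = 0" using ee by (simp add: algebra_simps)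
    hence "(1 - e) * \<sigma> e = 0" by (rule R)
    hence 1: "\<sigma> e = e * \<sigma> e" by (simp add: algebra_simps)
    have "(1 - e) * e = 0" using ee by (simp add: algebra_simps)
    hence "e * \<sigma> (1 - e) = 0" by (rule R)
    hence "e * (1 - \<sigma> e) = 0" by (simp add: sub)
    hence "e = e * \<sigma> e" by (simp add: algebra_simps)
    with 1 show ?thesis by simp
  qed
  have "central e" if "idempotent e" for e :: 'a
    unfolding central_def
  proof
    fix r
    from that have ee: "e * e = e" unfolding idempotent_def .
    have s1: "\<sigma> e = e" using fix_ that by blast
    have "e * ((1 - e) * r) = 0" by (simp add: algebra_simps ee flip: mult.assoc)
    hence "(1 - e) * r * \<sigma> e = 0" using R by (metis mult.assoc)
    hence a: "r * e = e * r * e" using s1 by (simp add: algebra_simps)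
    have "(1 - e) * (e * r) = 0" by (simp add: algebra_simps ee flip: mult.assoc)
    hence "e * r * \<sigma> (1 - e) = 0" using R by (metis mult.assoc)
    hence b: "e * r = e * r * e" using s1 sub by (simp add: algebra_simps ee)
    show "e * r = r * e" using a b by simp
  qed
  thus ?thesis using fix_ unfolding abelian_ring_def by blast
qed

end
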